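(* Consider the GSEM described in the context in the "CDC" case: conditional on $\mathbf W=\mathbf w$, $X\sim N(\mu_x,\sigma_x^2)$ with $\mu_x=\mathbf w_1^\top\boldsymbol\beta_x$ and $Y\sim N(\mu_y,\sigma_y^2)$ with $\mu_y=\mathbf w^\top\boldsymbol\beta_y$ ($\sigma_x,\sigma_y>0$), and $M$ is Bernoulli with $P(M=1\mid\mathbf w)=\mathrm{expit}(\mathbf w^\top\boldsymbol\beta_m)$, $\mathrm{expit}(t)=e^t/(1+e^t)$ (so $M=1$ iff $Z_m^*>u_m(\mathbf w)$). Define $u_m(\mathbf w)=\Phi^{-1}(F_m(0\mid\mathbf w))=-\Phi^{-1}(\mathrm{expit}(\mathbf w^\top\boldsymbol\beta_m))$, and for real $z$, $p_z=\Phi(\tau_m u_m(\mathbf w)-\alpha z)$, $d_z=\phi(\tau_m u_m(\mathbf w)-\alpha z)$; let $z_x=(x-\mathbf w_1^\top\boldsymbol\beta_x)/\sigma_x$. Then for any $x_0,x_1$, $$\mathrm{NDE}(x_0,x_1;\mathbf w)=\frac{\sigma_y(\gamma+\alpha\beta)(z_{x_1}-z_{x_0})}{\tau_y}-\frac{\sigma_y\beta}{\tau_y}\left(\frac{p_{z_{x_0}}}{p_{z_{x_1}}}-\frac{1-p_{z_{x_0}}}{1-p_{z_{x_1}}}\right)d_{z_{x_1}},$$ $$\mathrm{NIE}(x_0,x_1;\mathbf w)=\frac{\sigma_y\beta}{\tau_y}\left(\frac{p_{z_{x_0}}}{p_{z_{x_1}}}-\frac{1-p_{z_{x_0}}}{1-p_{z_{x_1}}}\right)d_{z_{x_1}}.$$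 Consequently, $\mathrm{NDE}(x_0,x_1;\mathbf w)=0$ if $\gamma=\beta=0$ or $\gamma=\alpha=0$, and $\mathrm{NIE}(x_0,x_1;\mathbf w)=0$ if $\alpha=0$ or $\beta=0$.
   Context: Generalized structural equation model (GSEM). Let $X$ (exposure), $M$ (mediator), $Y$ (outcome) be scalar random variables and $\mathbf W=(\mathbf W_1^\top,\mathbf W_2^\top)^\top$ a vector of confounders (first entry $1$), with $\mathbf w=(\mathbf w_1^\top,\mathbf w_2^\top)^\top$ a fixed value. Fix real parameters $\alpha,\beta,\gamma$ and let $(Z_x,Z_m,Z_y)$ be latent variables with $Z_x\sim N(0,1)$, $Z_m=\alpha Z_x+\epsilon_m$, $Z_y=\gamma Z_x+\beta Z_m+\epsilon_y$, where $Z_x,\epsilon_m,\epsilon_y$ are independent $N(0,1)$ (independent of $\mathbf W$). Put $\tau_m=\sqrt{\alpha^2+1}$, $\tau_y=\sqrt{(\gamma+\alpha\beta)^2+\beta^2+1}$, $Z_m^*=Z_m/\tau_m$, $Z_y^*=Z_y/\tau_y$ (each standard normal). Conditional on $\mathbf W=\mathbf w$, with marginal CDFs $F_x(\cdot\mid\mathbf w),F_m(\cdot\mid\mathbf w),F_y(\cdot\mid\mathbf w)$ given by generalized linear models, the observed variables are $X=F_x^{-1}(\Phi(Z_x))$, $M=F_m^{-1}(\Phi(Z_m^* ))$, $Y=F_y^{-1}(\Phi(Z_y^* ))$, where $\Phi,\phi$ denote the standard normal CDF and density and $F^{-1}$ is the generalized inverse (quantile function). Counterfactual mean: $\mathrm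 E\{Y(x_a,M(x_b))\mid\mathbf W=\mathbf w\}:=\mathrm E_M\{\mathrm E(Y\mid M,X=x_a,\mathbf W=\mathbf w)\mid X=x_b,\mathbf W=\mathbf w\}$. Conditional natural direct and indirect effects for a change of $X$ from $x_0$ to $x_1$: $\mathrm{NDE}(x_0,x_1;\mathbf w)=\mathrm E\{Y(x_1,M(x_0))\mid\mathbf w\}-\mathrm E\{Y(x_0,M(x_0))\mid\mathbf w\}$ and $\mathrm{NIE}(x_0,x_1;\mathbf w)=\mathrm E\{Y(x_1,M(x_1))\mid\mathbf w\}-\mathrm E\{Y(x_1,M(x_0))\mid\mathbf w\}$. *)

theory Defs
  imports "HOL-Probability.Probability"
begin

abbreviation phi :: "real \<Rightarrow> real" where "phi \<equiv> std_normal_density"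

definition Phi :: "real \<Rightarrow> real" where
  "Phi t = (\<integral>s. indicator {..t} s * std_normal_density s \<partial>lborel)"

definition quantile :: "(real \<Rightarrow> real) \<Rightarrow> real \<Rightarrow> real" where
  "quantile F p = Inf {t. p \<le> F t}"

definition Phi_inv :: "real \<Rightarrow> real" where
  "Phi_inv = quantile Phi"

definition expit :: "real \<Rightarrow> real" where
  "expit t = exp t / (1 + exp t)"

definition normal_cdf :: "real \<Rightarrow> real \<Rightarrow> real \<Rightarrow> real" where
  "normal_cdf \<mu> \<sigma> x = (\<integral>s. indicator {..x} s * normal_density \<mu> \<sigma> s \<partial>lborel)"

definition bern_cdf :: "real \<Rightarrow> real \<Rightarrow> real" where
  "bern_cdf \<pi> t = (if t < 0 then 0 else if t < 1 then 1 - \<pi> else 1)"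

definition lin :: "real list \<Rightarrow> real list \<Rightarrow> real" where
  "lin ws bs = (\<Sum>i<length ws. ws ! i * bs ! i)"

section \<open>The GSEM (conditional on W = w; marginal CDFs Fx Fm Fy already evaluated at w)\<close>

definition tau_m :: "real \<Rightarrow> real" where
  "tau_m \<alpha> = sqrt (\<alpha>\<^sup>2 + 1)"

definition tau_y :: "real \<Rightarrow> real \<Rightarrow> real \<Rightarrow> real" where
  "tau_y \<alpha> \<beta> \<gamma> = sqrt ((\<gamma> + \<alpha> * \<beta>)\<^sup>2 + \<beta>\<^sup>2 + 1)"

text \<open>Observed variables as functions of the latent Z_x = zx and the independent
  standard normal errors em, ey.\<close>
definition obsX :: "(real \<Rightarrow> real) \<Rightarrow> real \<Rightarrow> real" where
  "obsX Fx zx = quantile Fx (Phi zx)"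

definition obsM :: "real \<Rightarrow> (real \<Rightarrow> real) \<Rightarrow> real \<Rightarrow> real \<Rightarrow> real" where
  "obsM \<alpha> Fm zx em = quantile Fm (Phi ((\<alpha> * zx + em) / tau_m \<alpha>))"

definition obsY :: "real \<Rightarrow> real \<Rightarrow> real \<Rightarrow> (real \<Rightarrow> real) \<Rightarrow> real \<Rightarrow> real \<Rightarrow> real \<Rightarrow> real" where
  "obsY \<alpha> \<beta> \<gamma> Fy zx em ey =
     quantile Fy (Phi ((\<gamma> * zx + \<beta> * (\<alpha> * zx + em) + ey) / tau_y \<alpha> \<beta> \<gamma>))"

text \<open>The latent value of Z_x corresponding to the event X = x (X is a strictly
  increasing function of Z_x in the continuous-exposure case).\<close>
definition latX :: "(real \<Rightarrow> real) \<Rightarrow> real \<Rightarrow> real" where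
  "latX Fx x = (THE z. obsX Fx z = x)"

text \<open>P(M = m | X = x, W = w): given X = x, Z_x is fixed and em ~ N(0,1).\<close>
definition cond_PM :: "real \<Rightarrow> (real \<Rightarrow> real) \<Rightarrow> (real \<Rightarrow> real) \<Rightarrow> real \<Rightarrow> real \<Rightarrow> real" where
  "cond_PM \<alpha> Fx Fm m x =
     (\<integral>em. indicator {e. obsM \<alpha> Fm (latX Fx x) e = m} em * phi em \<partial>lborel)"

text \<open>E(Y | M = m, X = x, W = w) for a discrete mediator (the event M = m has
  positive conditional probability): E(Y 1{M=m} | X=x) / P(M=m | X=x).\<close>
definition cond_EY :: "real \<Rightarrow> real \<Rightarrow> real \<Rightarrow> (real \<Rightarrow> real) \<Rightarrow> (real \<Rightarrow> real) \<Rightarrow> (real \<Rightarrow> real)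
                        \<Rightarrow> real \<Rightarrow> real \<Rightarrow> real" where
  "cond_EY \<alpha> \<beta> \<gamma> Fx Fm Fy m x =
     (\<integral>em. (\<integral>ey. indicator {e. obsM \<alpha> Fm (latX Fx x) e = m} em
                    * obsY \<alpha> \<beta> \<gamma> Fy (latX Fx x) em ey * phi em * phi ey \<partial>lborel) \<partial>lborel)
     / cond_PM \<alpha> Fx Fm m x"

text \<open>Counterfactual mean E{Y(x_a, M(x_b)) | w} := E_M{ E(Y | M, X = x_a, w) | X = x_b, w }.\<close>
definition cf_mean :: "real \<Rightarrow> real \<Rightarrow> real \<Rightarrow> (real \<Rightarrow> real) \<Rightarrow> (real \<Rightarrow> real) \<Rightarrow> (real \<Rightarrow> real)
                        \<Rightarrow> real \<Rightarrow> real \<Rightarrow> real" where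
  "cf_mean \<alpha> \<beta> \<gamma> Fx Fm Fy xa xb =
     (\<integral>em. cond_EY \<alpha> \<beta> \<gamma> Fx Fm Fy (obsM \<alpha> Fm (latX Fx xb) em) xa * phi em \<partial>lborel)"

definition NDE :: "real \<Rightarrow> real \<Rightarrow> real \<Rightarrow> (real \<Rightarrow> real) \<Rightarrow> (real \<Rightarrow> real) \<Rightarrow> (real \<Rightarrow> real)
                        \<Rightarrow> real \<Rightarrow> real \<Rightarrow> real" where
  "NDE \<alpha> \<beta> \<gamma> Fx Fm Fy x0 x1 =
     cf_mean \<alpha> \<beta> \<gamma> Fx Fm Fy x1 x0 - cf_mean \<alpha> \<beta> \<gamma> Fx Fm Fy x0 x0"

definition NIE :: "real \<Rightarrow> real \<Rightarrow> real \<Rightarrow> (real \<Rightarrow> real) \<Rightarrow> (real \<Rightarrow> real) \<Rightarrow> (real \<Rightarrow> real)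
                        \<Rightarrow> real \<Rightarrow> real \<Rightarrow> real" where
  "NIE \<alpha> \<beta> \<gamma> Fx Fm Fy x0 x1 =
     cf_mean \<alpha> \<beta> \<gamma> Fx Fm Fy x1 x1 - cf_mean \<alpha> \<beta> \<gamma> Fx Fm Fy x1 x0"

end

theory Submission
  imports Defs "HOL-Real_Asymp.Real_Asymp"
begin


lemma phi_pos: "phi x > 0" by (simp add: normal_density_pos)

lemma int_ind_phi: "A \<in> sets borel \<Longrightarrow> integrable lborel (\<lambda>s. indicator A s * phi s :: real)"
  using integrable_real_mult_indicator[of A lborel phi] by (simp add: mult.commute)

lemma int_ind_xphi: "A \<in> sets borel \<Longrightarrow> integrable lborel (\<lambda>s. indicator A s * (s * phi s) :: real)"
  using integrable_real_mult_indicator[of A lborel "\<lambda>s. phi s * s ^ 1"] integrable_std_normal_moment[of 1]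
  by (simp add: mult.commute)

definition N :: "real measure" where "N = density lborel phi"

lemma N_rd: "real_distribution N"
  unfolding N_def real_distribution_def real_distribution_axioms_def
  using prob_space_normal_density[where \<mu>=0 and \<sigma>=1] by simp

lemma Phi_cdf: "Phi t = cdf N t"
proof -
  have "cdf N t = measure N {..t}" by (simp add: cdf_def)
  also have "\<dots> = integral\<^sup>L N (indicator {..t})"
    using N_rd by (simp add: N_def)
  also have "\<dots> = (\<integral>s. phi s * indicator {..t} s \<partial>lborel)"
    unfolding N_def by (subst integral_density) auto
  finally show ?thesis by (simp add: Phi_def mult.commute)
qed

lemma measure_N: "A \<in> sets borel \<Longrightarrow> measure N A = (\<integral>s. indicator A s * phi s \<partial>lborel)"
proof -
  assume A: "A \<in> sets borel"
  have "measure N A = integral\<^sup>L N (indicator A)"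
    using N_rd A by (simp add: N_def)
  also have "\<dots> = (\<integral>s. phi s * indicator A s \<partial>lborel)"
    unfolding N_def using A by (subst integral_density) auto
  finally show ?thesis by (simp add: mult.commute)
qed

lemma measure_N_Ioc_pos: "a < b \<Longrightarrow> measure N {a<..b} > 0"
proof -
  assume ab: "a < b"
  have ge: "(\<integral>s. indicator {a<..b} s * phi s \<partial>lborel) \<ge> 0"
    by (intro integral_nonneg_AE) auto
  have "(\<integral>s. indicator {a<..b} s * phi s \<partial>lborel) \<noteq> 0"
  proof
    assume "(\<integral>s. indicator {a<..b} s * phi s \<partial>lborel) = 0"
    then have "AE x in lborel. indicator {a<..b} x * phi x = (0::real)"
      by (subst (asm) integral_nonneg_eq_0_iff_AE) (auto intro: int_ind_phi)
    moreover have "\<And>x. indicator {a<..b} x * phi x = (0::real) \<Longrightarrow> x \<notin> {a<..b}"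
      using phi_pos by (simp add: indicator_def split: if_splits) (metis less_irrefl)
    ultimately have "AE x in lborel. x \<notin> {a<..b}"
      by (rule eventually_mono)
    then have "emeasure lborel {x. \<not> x \<notin> {a<..b}} = 0"
      by (subst (asm) AE_iff_measurable[OF _ refl]) auto
    moreover have "{x. \<not> x \<notin> {a<..b}} = {a<..b}" by auto
    ultimately have "emeasure lborel {a<..b} = 0" by metis
    with ab show False by simp
  qed
  with ge have "(\<integral>s. indicator {a<..b} s * phi s \<partial>lborel) > 0" by linarith
  then show ?thesis by (simp add: measure_N)
qed

lemma Phi_strict: "a < b \<Longrightarrow> Phi a < Phi b"
proof -
  assume ab: "a < b"
  interpret real_distribution N by (rule N_rd)
  show ?thesis using cdf_diff_eq[OF ab] measure_N_Ioc_pos[OF ab] by (simp add: Phi_cdf)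
qed

lemma Phi_mono: "a \<le> b \<Longrightarrow> Phi a \<le> Phi b"
  by (metis Phi_strict order_le_less order_less_imp_le)

lemma Phi_le_iff: "Phi a \<le> Phi b \<longleftrightarrow> a \<le> b"
  by (meson Phi_mono Phi_strict not_less)

lemma Phi_less_iff: "Phi a < Phi b \<longleftrightarrow> a < b"
  by (meson Phi_mono Phi_strict not_less)

lemma Phi_cont: "isCont Phi x"
proof -
  interpret real_distribution N by (rule N_rd)
  have "measure N {x} = (\<integral>s. indicator {x} s * phi s \<partial>lborel)" by (simp add: measure_N)
  also have "\<dots> = 0"
    by (rule integral_eq_zero_AE, rule AE_mp[OF AE_lborel_singleton[of x]]) auto
  finally have "isCont (cdf N) x" by (simp add: isCont_cdf)
  moreover have "Phi = cdf N" by (rule ext) (simp add: Phi_cdf)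
  ultimately show ?thesis by simp
qed

lemma Phi_top: "(Phi \<longlongrightarrow> 1) at_top"
proof -
  interpret real_distribution N by (rule N_rd)
  have "Phi = cdf N" by (rule ext) (simp add: Phi_cdf)
  then show ?thesis using cdf_lim_at_top_prob by simp
qed

lemma Phi_bot: "(Phi \<longlongrightarrow> 0) at_bot"
proof -
  interpret real_distribution N by (rule N_rd)
  have "Phi = cdf N" by (rule ext) (simp add: Phi_cdf)
  then show ?thesis using cdf_lim_at_bot by simp
qed



lemma Phi_surj: assumes "0 < q" "q < 1" shows "\<exists>t. Phi t = q"
proof -
  have "eventually (\<lambda>t. Phi t > q) at_top"
    using Phi_top assms(2) by (rule order_tendstoD)
  then obtain b where b: "Phi b > q" by (meson eventually_at_top_linorder order_refl)
  have "eventually (\<lambda>t. Phi t < q) at_bot"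
    using Phi_bot assms(1) by (rule order_tendstoD)
  then obtain a0 where a0: "\<And>t. t \<le> a0 \<Longrightarrow> Phi t < q" by (auto simp: eventually_at_bot_linorder)
  define a where "a = min a0 (b - 1)"
  have a: "Phi a < q" "a \<le> b" using a0 by (auto simp: a_def)
  have "\<exists>t\<ge>a. t \<le> b \<and> Phi t = q"
    by (rule IVT) (use a b Phi_cont in auto)
  then show ?thesis by blast
qed

lemma quantile_Phi: "quantile Phi (Phi t) = t"
proof -
  have "{s. Phi t \<le> Phi s} = {t..}" by (auto simp: Phi_le_iff)
  then show ?thesis by (simp add: quantile_def)
qed

lemma Phi_Phi_inv: "0 < q \<Longrightarrow> q < 1 \<Longrightarrow> Phi (Phi_inv q) = q"
  using Phi_surj quantile_Phi unfolding Phi_inv_def by metis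

lemma normal_cdf_Phi: assumes s: "\<sigma> > 0" shows "normal_cdf \<mu> \<sigma> x = Phi ((x - \<mu>) / \<sigma>)"
proof -
  have "normal_cdf \<mu> \<sigma> x = \<bar>\<sigma>\<bar> *\<^sub>R (\<integral>u. indicator {..x} (\<mu> + \<sigma> * u) * normal_density \<mu> \<sigma> (\<mu> + \<sigma> * u) \<partial>lborel)"
    unfolding normal_cdf_def using s
    by (subst lborel_integral_real_affine[where c=\<sigma> and t=\<mu>]) auto
  also have "\<dots> = \<sigma> * (\<integral>u. (1/\<sigma>) * (indicator {..(x - \<mu>) / \<sigma>} u * phi u) \<partial>lborel)"
  proof -
    have nd: "normal_density \<mu> \<sigma> (\<mu> + \<sigma> * u) = phi u / \<sigma>" for u
    proof -
      have "sqrt (2 * pi * \<sigma>\<^sup>2) = \<sigma> * sqrt (2 * pi)" using s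
        by (simp add: real_sqrt_mult)
      moreover have "(\<mu> + \<sigma> * u - \<mu>)\<^sup>2 / (2 * \<sigma>\<^sup>2) = u\<^sup>2 / 2" using s
        by (simp add: power_mult_distrib)
      ultimately show ?thesis unfolding normal_density_def std_normal_density_def
        by (simp only:) (simp add: field_simps)
    qed
    have ind: "indicator {..x} (\<mu> + \<sigma> * u) = (indicator {..(x - \<mu>) / \<sigma>} u :: real)" for u
      using s by (simp add: indicator_def field_simps)
    show ?thesis using s by (simp add: nd ind)
  qed
  also have "\<dots> = (\<integral>u. indicator {..(x - \<mu>) / \<sigma>} u * phi u \<partial>lborel)"
    using s by simp
  finally show ?thesis by (simp add: Phi_def)
qed

lemma quantile_normal: assumes s: "\<sigma> > 0"
  shows "quantile (normal_cdf \<mu> \<sigma>) (Phi z) = \<mu> + \<sigma> * z"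
proof -
  have "{t. Phi z \<le> normal_cdf \<mu> \<sigma> t} = {\<mu> + \<sigma> * z..}"
    using s by (auto simp: normal_cdf_Phi Phi_le_iff field_simps)
  then show ?thesis by (simp add: quantile_def)
qed



lemma phi_deriv: "(phi has_real_derivative (- x * phi x)) (at x)"
  unfolding std_normal_density_def
  by (auto intro!: derivative_eq_intros simp: power2_eq_square field_simps)

lemma phi_cont: "isCont phi x"
  using phi_deriv DERIV_isCont by blast

lemma phi_top: "(phi \<longlongrightarrow> 0) at_top"
  unfolding std_normal_density_def by real_asymp

lemma upper_xphi: "(\<integral>s. indicator {c<..} s * (s * phi s) \<partial>lborel) = phi c"
proof -
  have "(LBINT x=ereal c..\<infinity>. x * phi x) = 0 - (- phi c)"
  proof (rule interval_integral_FTC_integrable[where F="\<lambda>x. - phi x"])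
    show "ereal c < \<infinity>" by simp
    show "((\<lambda>x. - phi x) has_vector_derivative x * phi x) (at x)" for x
      using DERIV_minus[OF phi_deriv[of x]]
      by (simp add: has_real_derivative_iff_has_vector_derivative[symmetric])
    show "isCont (\<lambda>x. x * phi x) x" for x
      using phi_cont by (intro continuous_intros) auto
    show "set_integrable lborel (einterval (ereal c) \<infinity>) (\<lambda>x. x * phi x)"
      unfolding set_integrable_def using int_ind_xphi[of "{c<..}"]
      by (simp add: einterval_def greaterThan_def)
    show "(((\<lambda>x. - phi x) \<circ> real_of_ereal) \<longlongrightarrow> - phi c) (at_right (ereal c))"
      unfolding ereal_tendsto_simps using phi_cont[of c]
      by (intro tendsto_intros) (simp add: isCont_def filterlim_at_split)
    show "(((\<lambda>x. - phi x) \<circ> real_of_ereal) \<longlongrightarrow> 0) (at_left \<infinity>)"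
      unfolding ereal_tendsto_simps using tendsto_minus[OF phi_top] by simp
  qed
  then show ?thesis
    by (simp add: interval_integral_to_infinity_eq set_lebesgue_integral_def)
qed

lemma int_xphi: "(\<integral>s. s * phi s \<partial>lborel) = 0"
  using integral_std_normal_moment_odd[of 0] by (simp add: mult.commute)

lemma lower_xphi: "(\<integral>s. indicator {..c} s * (s * phi s) \<partial>lborel) = - phi c"
proof -
  have "(\<integral>s. indicator {..c} s * (s * phi s) \<partial>lborel) + (\<integral>s. indicator {c<..} s * (s * phi s) \<partial>lborel)
     = (\<integral>s. indicator {..c} s * (s * phi s) + indicator {c<..} s * (s * phi s) \<partial>lborel)"
    using Bochner_Integration.integral_add[OF int_ind_xphi[of "{..c}", simplified] int_ind_xphi[of "{c<..}", simplified]] by simp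
  also have "\<dots> = (\<integral>s. s * phi s \<partial>lborel)"
    by (rule Bochner_Integration.integral_cong) (auto simp: indicator_def)
  finally show ?thesis using upper_xphi int_xphi by simp
qed

lemma upper_phi: "(\<integral>s. indicator {c<..} s * phi s \<partial>lborel) = 1 - Phi c"
proof -
  have "(\<integral>s. indicator {..c} s * phi s \<partial>lborel) + (\<integral>s. indicator {c<..} s * phi s \<partial>lborel)
     = (\<integral>s. indicator {..c} s * phi s + indicator {c<..} s * phi s \<partial>lborel)"
    using Bochner_Integration.integral_add[OF int_ind_phi[of "{..c}", simplified] int_ind_phi[of "{c<..}", simplified]] by simp
  also have "\<dots> = (\<integral>s. phi s \<partial>lborel)"
    by (rule Bochner_Integration.integral_cong) (auto simp: indicator_def)
  finally show ?thesis by (simp add: Phi_def)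
qed

lemma Phi_pos: "0 < Phi c" and Phi_lt1: "Phi c < 1"
proof -
  have "0 \<le> Phi (c - 1)" unfolding Phi_def by (intro integral_nonneg_AE) auto
  then show "0 < Phi c" using Phi_strict[of "c - 1" c] by simp
  have "(\<integral>s. indicator {c+1<..} s * phi s \<partial>lborel) \<ge> 0" by (intro integral_nonneg_AE) auto
  then have "Phi (c + 1) \<le> 1" using upper_phi[of "c+1"] by simp
  then show "Phi c < 1" using Phi_strict[of c "c + 1"] by simp
qed



lemma int_xphi_integrable: "integrable lborel (\<lambda>s. s * phi s)"
  using integrable_std_normal_moment[of 1] by (simp add: mult.commute)

lemma inner_int: "(\<integral>e. (a + b * e) * phi e \<partial>lborel) = a"
proof -
  have "(\<integral>e. (a + b * e) * phi e \<partial>lborel) = (\<integral>e. a * phi e + b * (e * phi e) \<partial>lborel)"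
    by (simp add: algebra_simps)
  also have "\<dots> = a * (\<integral>e. phi e \<partial>lborel) + b * (\<integral>e. e * phi e \<partial>lborel)"
    using int_xphi_integrable by simp
  finally show ?thesis using int_xphi by simp
qed

lemma double_int:
  assumes S: "S \<in> sets borel"
  shows "(\<integral>m. (\<integral>e. indicator S m * (A + B * m + C * e) * phi m * phi e \<partial>lborel) \<partial>lborel)
       = A * (\<integral>s. indicator S s * phi s \<partial>lborel) + B * (\<integral>s. indicator S s * (s * phi s) \<partial>lborel)"
proof -
  have "(\<integral>m. (\<integral>e. indicator S m * (A + B * m + C * e) * phi m * phi e \<partial>lborel) \<partial>lborel)
      = (\<integral>m. indicator S m * (A + B * m) * phi m \<partial>lborel)"
  proof (rule Bochner_Integration.integral_cong[OF refl])
    fix m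
    have "(\<integral>e. indicator S m * (A + B * m + C * e) * phi m * phi e \<partial>lborel)
        = (\<integral>e. (indicator S m * (A + B * m) * phi m + (indicator S m * C * phi m) * e) * phi e \<partial>lborel)"
      by (rule Bochner_Integration.integral_cong) (auto simp: algebra_simps)
    then show "(\<integral>e. indicator S m * (A + B * m + C * e) * phi m * phi e \<partial>lborel)
        = indicator S m * (A + B * m) * phi m" by (simp only: inner_int)
  qed
  also have "\<dots> = (\<integral>m. A * (indicator S m * phi m) + B * (indicator S m * (m * phi m)) \<partial>lborel)"
    by (simp add: algebra_simps)
  also have "\<dots> = A * (\<integral>s. indicator S s * phi s \<partial>lborel) + B * (\<integral>s. indicator S s * (s * phi s) \<partial>lborel)"
    using int_ind_phi[OF S] int_ind_xphi[OF S] by simp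
  finally show ?thesis .
qed

lemma step_int: "(\<integral>m. (if m \<le> c then E0 else E1) * phi m \<partial>lborel) = E0 * Phi c + E1 * (1 - Phi c)"
proof -
  have "(\<integral>m. (if m \<le> c then E0 else E1) * phi m \<partial>lborel)
      = (\<integral>m. E0 * (indicator {..c} m * phi m) + E1 * (indicator {c<..} m * phi m) \<partial>lborel)"
    by (rule Bochner_Integration.integral_cong) (auto simp: indicator_def)
  also have "\<dots> = E0 * Phi c + E1 * (1 - Phi c)"
    using int_ind_phi[of "{..c}", simplified] int_ind_phi[of "{c<..}", simplified] upper_phi[of c]
    by (simp add: Phi_def)
  finally show ?thesis .
qed

lemma expit_bounds: "0 < expit t" "expit t < 1"
  unfolding expit_def by (auto simp: add_pos_pos)

lemma quantile_bern: assumes "0 < \<pi>" "\<pi> < 1" "0 < q" "q < 1"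
  shows "quantile (bern_cdf \<pi>) q = (if q \<le> 1 - \<pi> then 0 else 1)"
proof (cases "q \<le> 1 - \<pi>")
  case True
  then have "{t. q \<le> bern_cdf \<pi> t} = {0..}" using assms by (auto simp: bern_cdf_def)
  then show ?thesis using True by (simp add: quantile_def)
next
  case False
  then have "{t. q \<le> bern_cdf \<pi> t} = {1..}" using assms by (auto simp: bern_cdf_def)
  then show ?thesis using False by (simp add: quantile_def)
qed

theorem proposition2:
  fixes \<alpha> \<beta> \<gamma> \<sigma>x \<sigma>y x0 x1 :: real
    and w1 w2 \<beta>x \<beta>m1 \<beta>m2 \<beta>y1 \<beta>y2 :: "real list"
    and Fx Fm Fy :: "real \<Rightarrow> real" and um :: real and p d zx :: "real \<Rightarrow> real"
  assumes "\<sigma>x > 0" and "\<sigma>y > 0"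
    and "w1 \<noteq> []" and "hd w1 = 1"
    and "length \<beta>x = length w1"
    and "length \<beta>m1 = length w1" and "length \<beta>m2 = length w2"
    and "length \<beta>y1 = length w1" and "length \<beta>y2 = length w2"
  defines "Fx \<equiv> normal_cdf (lin w1 \<beta>x) \<sigma>x"
    and "Fm \<equiv> bern_cdf (expit (lin w1 \<beta>m1 + lin w2 \<beta>m2))"
    and "Fy \<equiv> normal_cdf (lin w1 \<beta>y1 + lin w2 \<beta>y2) \<sigma>y"
    and "um \<equiv> Phi_inv (Fm 0)"
    and "p \<equiv> (\<lambda>z. Phi (tau_m \<alpha> * um - \<alpha> * z))"
    and "d \<equiv> (\<lambda>z. phi (tau_m \<alpha> * um - \<alpha> * z))"
    and "zx \<equiv> (\<lambda>x. (x - lin w1 \<beta>x) / \<sigma>x)"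
  shows "NDE \<alpha> \<beta> \<gamma> Fx Fm Fy x0 x1 =
           \<sigma>y * (\<gamma> + \<alpha> * \<beta>) * (zx x1 - zx x0) / tau_y \<alpha> \<beta> \<gamma>
           - \<sigma>y * \<beta> / tau_y \<alpha> \<beta> \<gamma>
             * (p (zx x0) / p (zx x1) - (1 - p (zx x0)) / (1 - p (zx x1))) * d (zx x1)
       \<and> NIE \<alpha> \<beta> \<gamma> Fx Fm Fy x0 x1 =
           \<sigma>y * \<beta> / tau_y \<alpha> \<beta> \<gamma>
             * (p (zx x0) / p (zx x1) - (1 - p (zx x0)) / (1 - p (zx x1))) * d (zx x1)
       \<and> ((\<gamma> = 0 \<and> \<beta> = 0) \<or> (\<gamma> = 0 \<and> \<alpha> = 0) \<longrightarrow> NDE \<alpha> \<beta> \<gamma> Fx Fm Fy x0 x1 = 0)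
       \<and> (\<alpha> = 0 \<or> \<beta> = 0 \<longrightarrow> NIE \<alpha> \<beta> \<gamma> Fx Fm Fy x0 x1 = 0)"
proof -
  let ?\<mu>x = "lin w1 \<beta>x" and ?\<mu>y = "lin w1 \<beta>y1 + lin w2 \<beta>y2"
  define \<pi> where "\<pi> = expit (lin w1 \<beta>m1 + lin w2 \<beta>m2)"
  define tm where "tm = tau_m \<alpha>"
  define ty where "ty = tau_y \<alpha> \<beta> \<gamma>"
  define c where "c = (\<lambda>z. tm * um - \<alpha> * z)"
  define A where "A = (\<lambda>z. ?\<mu>y + \<sigma>y * (\<gamma> + \<alpha> * \<beta>) * z / ty)"
  define B where "B = \<sigma>y * \<beta> / ty"
  define C where "C = \<sigma>y / ty"
  have pi01: "0 < \<pi>" "\<pi> < 1" unfolding \<pi>_def by (rule expit_bounds)+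
  have tm: "tm > 0" unfolding tm_def tau_m_def by (simp add: add_nonneg_pos)
  have ty: "ty > 0" unfolding ty_def tau_y_def by (simp add: add_nonneg_pos)
  have Fm0: "Fm 0 = 1 - \<pi>" unfolding Fm_def \<pi>_def bern_cdf_def by simp
  have um: "Phi um = 1 - \<pi>" unfolding um_def Fm0 using pi01 by (intro Phi_Phi_inv) auto
  have p_eq: "p = (\<lambda>z. Phi (c z))" and d_eq: "d = (\<lambda>z. phi (c z))"
    unfolding p_def d_def c_def tm_def by auto
  have L: "latX Fx x = zx x" for x
    unfolding latX_def
  proof (rule the_equality)
    show "obsX Fx (zx x) = x" unfolding obsX_def Fx_def zx_def
      using assms(1) by (simp add: quantile_normal)
    show "z = zx x" if "obsX Fx z = x" for z
      using that assms(1) unfolding obsX_def Fx_def zx_def by (simp add: quantile_normal field_simps)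
  qed
  have Mq: "obsM \<alpha> Fm z e = (if e \<le> c z then 0 else 1)" for z e
  proof -
    have "obsM \<alpha> Fm z e = (if Phi ((\<alpha> * z + e) / tm) \<le> 1 - \<pi> then 0 else 1)"
      unfolding obsM_def Fm_def tm_def[symmetric] \<pi>_def[symmetric]
      using pi01 by (simp add: quantile_bern Phi_pos Phi_lt1)
    also have "(Phi ((\<alpha> * z + e) / tm) \<le> 1 - \<pi>) = (e \<le> c z)"
      unfolding um[symmetric] Phi_le_iff c_def using tm by (simp add: field_simps)
    finally show ?thesis .
  qed
  have M0: "{e. obsM \<alpha> Fm z e = 0} = {..c z}" for z by (auto simp: Mq)
  have M1: "{e. obsM \<alpha> Fm z e = 1} = {c z<..}" for z by (auto simp: Mq)
  have Y: "obsY \<alpha> \<beta> \<gamma> Fy z em ey = A z + B * em + C * ey" for z em ey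
    unfolding obsY_def Fy_def ty_def[symmetric] A_def B_def C_def using assms(2) ty
    by (simp add: quantile_normal field_simps)
  have PM0: "cond_PM \<alpha> Fx Fm 0 x = Phi (c (zx x))" for x
    unfolding cond_PM_def L M0 Phi_def by simp
  have PM1: "cond_PM \<alpha> Fx Fm 1 x = 1 - Phi (c (zx x))" for x
    unfolding cond_PM_def L M1 by (simp add: upper_phi)
  have E0: "cond_EY \<alpha> \<beta> \<gamma> Fx Fm Fy 0 x
      = (A (zx x) * Phi (c (zx x)) - B * phi (c (zx x))) / Phi (c (zx x))" for x
    unfolding cond_EY_def PM0 L M0 Y
    by (subst double_int) (auto simp: lower_xphi Phi_def)
  have E1: "cond_EY \<alpha> \<beta> \<gamma> Fx Fm Fy 1 x
      = (A (zx x) * (1 - Phi (c (zx x))) + B * phi (c (zx x))) / (1 - Phi (c (zx x)))" for x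
    unfolding cond_EY_def PM1 L M1 Y
    by (subst double_int) (auto simp: upper_xphi upper_phi)
  have CF: "cf_mean \<alpha> \<beta> \<gamma> Fx Fm Fy xa xb
      = A (zx xa) + B * d (zx xa) * ((1 - p (zx xb)) / (1 - p (zx xa)) - p (zx xb) / p (zx xa))" for xa xb
  proof -
    have "cf_mean \<alpha> \<beta> \<gamma> Fx Fm Fy xa xb
        = (\<integral>m. (if m \<le> c (zx xb) then cond_EY \<alpha> \<beta> \<gamma> Fx Fm Fy 0 xa else cond_EY \<alpha> \<beta> \<gamma> Fx Fm Fy 1 xa)
              * phi m \<partial>lborel)"
      unfolding cf_mean_def L Mq by (rule Bochner_Integration.integral_cong) auto
    also have "\<dots> = cond_EY \<alpha> \<beta> \<gamma> Fx Fm Fy 0 xa * Phi (c (zx xb))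
                  + cond_EY \<alpha> \<beta> \<gamma> Fx Fm Fy 1 xa * (1 - Phi (c (zx xb)))"
      by (rule step_int)
    also have "\<dots> = A (zx xa) + B * d (zx xa) * ((1 - p (zx xb)) / (1 - p (zx xa)) - p (zx xb) / p (zx xa))"
    proof -
      have a: "Phi (c (zx xa)) > 0" "Phi (c (zx xa)) < 1" by (rule Phi_pos, rule Phi_lt1)
      then show ?thesis unfolding E0 E1 p_eq d_eq by (simp add: field_simps)
    qed
    finally show ?thesis .
  qed
  have p01: "0 < p z" "p z < 1" for z unfolding p_eq by (rule Phi_pos, rule Phi_lt1)
  have s1: "(1 - p z) / (1 - p z) = 1" "p z / p z = 1" for z
    using p01[of z] by auto
  have NDE: "NDE \<alpha> \<beta> \<gamma> Fx Fm Fy x0 x1 =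
           \<sigma>y * (\<gamma> + \<alpha> * \<beta>) * (zx x1 - zx x0) / tau_y \<alpha> \<beta> \<gamma>
           - \<sigma>y * \<beta> / tau_y \<alpha> \<beta> \<gamma>
             * (p (zx x0) / p (zx x1) - (1 - p (zx x0)) / (1 - p (zx x1))) * d (zx x1)"
  proof -
    have "NDE \<alpha> \<beta> \<gamma> Fx Fm Fy x0 x1 = A (zx x1) - A (zx x0)
       + B * d (zx x1) * ((1 - p (zx x0)) / (1 - p (zx x1)) - p (zx x0) / p (zx x1))"
      unfolding NDE_def CF s1 by simp
    also have "A (zx x1) - A (zx x0) = \<sigma>y * (\<gamma> + \<alpha> * \<beta>) * (zx x1 - zx x0) / ty"
      unfolding A_def by (simp add: diff_divide_distrib algebra_simps)
    finally show ?thesis unfolding ty_def B_def by (simp add: algebra_simps)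
  qed
  have NIE: "NIE \<alpha> \<beta> \<gamma> Fx Fm Fy x0 x1 =
           \<sigma>y * \<beta> / tau_y \<alpha> \<beta> \<gamma>
             * (p (zx x0) / p (zx x1) - (1 - p (zx x0)) / (1 - p (zx x1))) * d (zx x1)"
  proof -
    have "NIE \<alpha> \<beta> \<gamma> Fx Fm Fy x0 x1 =
       - (B * d (zx x1) * ((1 - p (zx x0)) / (1 - p (zx x1)) - p (zx x0) / p (zx x1)))"
      unfolding NIE_def CF s1 by simp
    then show ?thesis unfolding ty_def B_def by (simp add: algebra_simps)
  qed
  have a0: "p (zx x0) / p (zx x1) - (1 - p (zx x0)) / (1 - p (zx x1)) = 0" if "\<alpha> = 0"
  proof -
    have "p (zx x0) = p (zx x1)" unfolding p_def using that by simp
    then show ?thesis using p01[of "zx x1"] by simp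
  qed
  show ?thesis using NDE NIE a0 by auto
qed

end
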